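(* Let $c$ and $n$ be odd positive integers with $n>c$, and set $N=n-c-1$. There is a bijection between standard Young tableaux of shape with $2$ rows and $N$ columns and lattice paths in an $N\times N$ grid from the top-left corner to the bottom-right corner, using unit right and down steps and never going strictly below the diagonal joining these two corners, such that the parity of the number of unit squares of the grid lying above the path equals the parity of the Latin reading word of the corresponding tableau.
   Context: Young tableaux are standard, in English notation, with entries $1,\ldots,2N$. The Latin reading word of a tableau is obtained by reading its entries row by row from top to bottom, each row left to right; its parity is its sign as a permutation of $\{1,\ldots,2N\}$. *)

theory Defs
  imports "HOL-Combinatorics.Permutations"
begin

text \<open>Cells of the two-row shape with N columns: (row, column), rows 0,1 (0 = top),
  columns 0..N-1 (English notation).\<close>
definition cells2 :: "nat \<Rightarrow> (nat \<times> nat) set" where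
  "cells2 N = {(r, j). r < 2 \<and> j < N}"

text \<open>Standard Young tableaux of shape (N,N): a filling of the cells bijective onto
  {1..2N}, strictly increasing along rows (left to right) and down columns;
  the function is 0 outside the shape (so that tableaux are determined by their entries).\<close>
definition syt2 :: "nat \<Rightarrow> (nat \<times> nat \<Rightarrow> nat) set" where
  "syt2 N = {T. bij_betw T (cells2 N) {1..2*N}
      \<and> (\<forall>x. x \<notin> cells2 N \<longrightarrow> T x = 0)
      \<and> (\<forall>r j. r < 2 \<and> Suc j < N \<longrightarrow> T (r, j) < T (r, Suc j))
      \<and> (\<forall>j. j < N \<longrightarrow> T (0, j) < T (1, j))}"

definition reading_word :: "nat \<Rightarrow> (nat \<times> nat \<Rightarrow> nat) \<Rightarrow> nat list" where
  "reading_word N T = map (\<lambda>j. T (0, j)) [0..<N] @ map (\<lambda>j. T (1, j)) [0..<N]"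

definition reading_perm :: "nat \<Rightarrow> (nat \<times> nat \<Rightarrow> nat) \<Rightarrow> nat \<Rightarrow> nat" where
  "reading_perm N T = (\<lambda>i. if 1 \<le> i \<and> i \<le> 2*N then reading_word N T ! (i - 1) else i)"

text \<open>Lattice paths in the N x N grid from the top-left to the bottom-right corner,
  as step lists (True = unit right step, False = unit down step), never going strictly
  below the diagonal joining these corners: every prefix has at least as many right
  steps as down steps.\<close>
definition paths :: "nat \<Rightarrow> bool list set" where
  "paths N = {p. length p = 2*N \<and> count_list p True = N \<and> count_list p False = N
      \<and> (\<forall>k \<le> 2*N. count_list (take k p) False \<le> count_list (take k p) True)}"

text \<open>Number of unit squares of the grid lying above the path: the down step crossing a
  row at horizontal position x (number of right steps before it) has N - x squares of that
  row above/right of the path.\<close>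
definition area_above :: "nat \<Rightarrow> bool list \<Rightarrow> nat" where
  "area_above N p = (\<Sum>k\<in>{k. k < length p \<and> \<not> p ! k}. N - count_list (take k p) True)"

end

theory Submission
  imports Defs
begin


definition Pw :: "nat list \<Rightarrow> nat \<Rightarrow> nat" where
  "Pw w = (\<lambda>i. if 1 \<le> i \<and> i \<le> length w then w ! (i - 1) else i)"

definition invs :: "nat list \<Rightarrow> (nat \<times> nat) set" where
  "invs w = {(i,j). i < j \<and> j < length w \<and> w ! j < w ! i}"

lemma finite_invs: "finite (invs w)"
  by (rule finite_subset[of _ "{..<length w} \<times> {..<length w}"]) (auto simp: invs_def)

lemma Pw_permutes:
  assumes "distinct w" "set w = {1..length w}"
  shows "Pw w permutes {1..length w}"
proof (rule bij_imp_permutes)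
  have "inj_on (Pw w) {1..length w}"
    using assms(1) by (auto simp: inj_on_def Pw_def nth_eq_iff_index_eq)
  moreover have "Pw w ` {1..length w} = set w"
  proof
    show "Pw w ` {1..length w} \<subseteq> set w"
      by (auto simp: Pw_def)
    show "set w \<subseteq> Pw w ` {1..length w}"
    proof
      fix y assume "y \<in> set w"
      then obtain k where k: "k < length w" "y = w ! k" by (auto simp: in_set_conv_nth)
      then have "Pw w (Suc k) = y" "Suc k \<in> {1..length w}" by (auto simp: Pw_def)
      then show "y \<in> Pw w ` {1..length w}" by (metis imageI)
    qed
  qed
  ultimately show "bij_betw (Pw w) {1..length w} {1..length w}"
    using assms(2) by (simp add: bij_betw_def)
  show "x \<notin> {1..length w} \<Longrightarrow> Pw w x = x" for x by (auto simp: Pw_def)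
qed

lemma sorted_no_invs:
  assumes "distinct w" "set w = {1..length w}" "invs w = {}"
  shows "Pw w = id"
proof -
  have "sorted w"
    unfolding sorted_iff_nth_mono_less
  proof (intro allI impI)
    fix i j assume "i < j" "j < length w"
    then have "(i,j) \<notin> invs w" using assms(3) by auto
    then show "w ! i \<le> w ! j" using \<open>i<j\<close> \<open>j<length w\<close> by (auto simp: invs_def)
  qed
  have s: "set w = set [1..<Suc (length w)]"
    by (simp only: assms(2) set_upt atLeastLessThanSuc_atLeastAtMost)
  have e: "w = [1..<Suc (length w)]"
    by (rule sorted_distinct_set_unique[OF \<open>sorted w\<close> assms(1) sorted_upt distinct_upt s])
  have "i < length w \<Longrightarrow> w ! i = Suc i" for i
  proof -
    assume "i < length w"
    then have "[1..<Suc (length w)] ! i = 1 + i" by (simp only: nth_upt)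
    then show ?thesis using e by simp
  qed
  then show ?thesis
    by (auto simp: Pw_def fun_eq_iff)
qed

lemma tr_mono: "a < b \<Longrightarrow> (a,b) \<noteq> (i, Suc i) \<Longrightarrow>
   Transposition.transpose i (Suc i) a < Transposition.transpose i (Suc i) b"
  unfolding transpose_def by (cases "a = i"; cases "b = i"; cases "a = Suc i"; cases "b = Suc i"; simp)

lemma invs_swap:
  assumes "Suc i < length w" "w ! Suc i < w ! i"
  shows "card (invs w) = Suc (card (invs (w[i := w ! Suc i, Suc i := w ! i])))"
proof -
  define w' where "w' = w[i := w ! Suc i, Suc i := w ! i]"
  define t where "t = Transposition.transpose i (Suc i)"
  define h where "h = (\<lambda>(a,b). (t a, t b))"
  have w'n: "x < length w \<Longrightarrow> w' ! x = w ! (t x)" for x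
    using assms(1) unfolding w'_def t_def transpose_def by (cases "x = i"; cases "x = Suc i"; simp add: nth_list_update)
  have lw: "length w' = length w" by (simp add: w'_def)
  have tt: "t (t x) = x" for x by (simp add: t_def)
  have tl: "t x < length w \<longleftrightarrow> x < length w" for x
    using assms(1) unfolding t_def transpose_def by (cases "x = i"; cases "x = Suc i"; simp)
  have ti: "t i = Suc i" "t (Suc i) = i" by (auto simp: t_def)
  have bij: "bij_betw h (invs w') (invs w - {(i, Suc i)})"
  proof (rule bij_betw_byWitness[where f'=h])
    show "\<forall>a\<in>invs w'. h (h a) = a" by (auto simp: h_def tt)
    show "\<forall>a\<in>invs w - {(i, Suc i)}. h (h a) = a" by (auto simp: h_def tt)
    show "h ` invs w' \<subseteq> invs w - {(i, Suc i)}"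
    proof
      fix x assume "x \<in> h ` invs w'"
      then obtain a b where ab: "(a,b) \<in> invs w'" "x = (t a, t b)" by (auto simp: h_def)
      then have 1: "a < b" "b < length w" "w ! (t b) < w ! (t a)"
        using w'n lw by (auto simp: invs_def)
      have "(a,b) \<noteq> (i, Suc i)"
        using ab(1) w'n[of i] w'n[of "Suc i"] ti assms by (auto simp: invs_def)
      then have 2: "t a < t b" using 1 tr_mono unfolding t_def by blast
      have 3: "(t a, t b) \<noteq> (i, Suc i)"
      proof
        assume "(t a, t b) = (i, Suc i)"
        then have "a = Suc i" "b = i" using tt ti by (metis Pair_inject)+
        with 1 show False by simp
      qed
      show "x \<in> invs w - {(i, Suc i)}"
        using ab(2) 1 2 3 tl unfolding invs_def by auto
    qed
    show "h ` (invs w - {(i, Suc i)}) \<subseteq> invs w'"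
    proof
      fix x assume "x \<in> h ` (invs w - {(i, Suc i)})"
      then obtain a b where ab: "(a,b) \<in> invs w" "(a,b) \<noteq> (i, Suc i)" "x = (t a, t b)" by (auto simp: h_def)
      then have 1: "a < b" "b < length w" "w ! b < w ! a"
        by (auto simp: invs_def)
      have 2: "t a < t b" using 1 ab(2) tr_mono unfolding t_def by blast
      have "w' ! (t a) = w ! a" "w' ! (t b) = w ! b"
        using w'n tt tl 1 by (metis less_trans)+
      then show "x \<in> invs w'"
        using ab(3) 1 2 lw tl unfolding invs_def by auto
    qed
  qed
  have "(i, Suc i) \<in> invs w" using assms by (auto simp: invs_def)
  then have "card (invs w) = Suc (card (invs w - {(i, Suc i)}))"
    using finite_invs by (metis card_Suc_Diff1)
  then show ?thesis using bij_betw_same_card[OF bij] by (simp add: w'_def)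
qed

lemma Pw_swap:
  assumes "Suc i < length w"
  shows "Pw (w[i := w ! Suc i, Suc i := w ! i]) = Pw w \<circ> Transposition.transpose (Suc i) (Suc (Suc i))"
proof
  fix x
  show "Pw (w[i := w ! Suc i, Suc i := w ! i]) x = (Pw w \<circ> Transposition.transpose (Suc i) (Suc (Suc i))) x"
  proof (cases "x = Suc i \<or> x = Suc (Suc i)")
    case True then show ?thesis using assms by (auto simp: Pw_def nth_list_update)
  next
    case False
    then have "Transposition.transpose (Suc i) (Suc (Suc i)) x = x" by auto
    moreover have "x - 1 \<noteq> i" "x - 1 \<noteq> Suc i" if "1 \<le> x" using False that by auto
    ultimately show ?thesis by (auto simp: Pw_def nth_list_update)
  qed
qed

lemma evenperm_Pw:
  assumes "distinct w" "set w = {1..length w}"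
  shows "evenperm (Pw w) \<longleftrightarrow> even (card (invs w))"
  using assms
proof (induction "card (invs w)" arbitrary: w)
  case 0
  then have "invs w = {}" using finite_invs by auto
  then show ?case using 0 sorted_no_invs by simp
next
  case (Suc n)
  have "\<exists>i. Suc i < length w \<and> w ! Suc i < w ! i"
  proof (rule ccontr)
    assume a: "\<not> ?thesis"
    have "sorted w" unfolding sorted_iff_nth_Suc
    proof (intro allI impI)
      fix i assume "Suc i < length w" then show "w ! i \<le> w ! Suc i" using a not_less by blast
    qed
    then have "invs w = {}" by (auto simp: invs_def sorted_iff_nth_mono_less not_less[symmetric])
    then show False using Suc.hyps(2) by simp
  qed
  then obtain i where i: "Suc i < length w" "w ! Suc i < w ! i" by blast
  define w' where "w' = w[i := w ! Suc i, Suc i := w ! i]"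
  have c: "card (invs w) = Suc (card (invs w'))" using invs_swap[OF i] by (simp add: w'_def)
  have d: "distinct w'" "set w' = {1..length w'}" using Suc.prems i by (auto simp: w'_def)
  have IH: "evenperm (Pw w') \<longleftrightarrow> even (card (invs w'))"
    using Suc.hyps c d by auto
  have pp: "permutation (Pw w)"
    using Pw_permutes[OF Suc.prems] permutes_imp_permutation by blast
  have "evenperm (Pw w') \<longleftrightarrow> (evenperm (Pw w) \<longleftrightarrow> evenperm (Transposition.transpose (Suc i) (Suc (Suc i))))"
    unfolding w'_def Pw_swap[OF i(1)]
    by (rule evenperm_comp[OF pp permutation_swap_id])
  then have "evenperm (Pw w') \<longleftrightarrow> \<not> evenperm (Pw w)" by (simp add: evenperm_swap)
  then show ?case using IH c by simp
qed



lemma syt_mono: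
  assumes "T \<in> syt2 N" "r < 2" "i < j" "j < N"
  shows "T (r, i) < T (r, j)"
  using assms(3,4)
proof (induction j)
  case 0 then show ?case by simp
next
  case (Suc j)
  have step: "T (r, j) < T (r, Suc j)" using assms(1,2) Suc.prems by (auto simp: syt2_def)
  show ?case
  proof (cases "i = j")
    case True then show ?thesis using step by simp
  next
    case False then show ?thesis using Suc step by auto
  qed
qed

lemma syt_mono_iff:
  assumes "T \<in> syt2 N" "r < 2" "i < N" "j < N"
  shows "T (r, i) < T (r, j) \<longleftrightarrow> i < j"
  using syt_mono[OF assms(1,2)] assms(3,4) by (metis less_asym' linorder_neqE_nat)

lemma syt_eq_iff:
  assumes "T \<in> syt2 N" "r < 2" "i < N" "j < N"
  shows "T (r, i) = T (r, j) \<longleftrightarrow> i = j"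
  using syt_mono[OF assms(1,2)] assms(3,4) by (metis less_irrefl linorder_neqE_nat)

lemma syt_col:
  assumes "T \<in> syt2 N" "j < N"
  shows "T (0, j) < T (1, j)"
  using assms by (auto simp: syt2_def)

lemma syt_range:
  assumes "T \<in> syt2 N" "r < 2" "j < N"
  shows "1 \<le> T (r, j)" "T (r, j) \<le> 2 * N"
proof -
  have "(r, j) \<in> cells2 N" using assms by (auto simp: cells2_def)
  then have "T (r, j) \<in> {1..2*N}" using assms(1) by (auto simp: syt2_def bij_betw_def)
  then show "1 \<le> T (r, j)" "T (r, j) \<le> 2 * N" by auto
qed

lemma syt_neq:
  assumes "T \<in> syt2 N" "i < N" "j < N"
  shows "T (0, i) \<noteq> T (1, j)"
proof -
  have "inj_on T (cells2 N)" using assms(1) by (auto simp: syt2_def bij_betw_def)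
  moreover have "(0, i) \<in> cells2 N" "(1, j) \<in> cells2 N" using assms by (auto simp: cells2_def)
  ultimately show ?thesis by (metis inj_on_contraD zero_neq_one prod.inject)
qed

lemma syt_cover:
  assumes "T \<in> syt2 N" "x \<in> {1..2*N}"
  shows "(\<exists>j<N. T (0, j) = x) \<or> (\<exists>j<N. T (1, j) = x)"
proof -
  have "x \<in> T ` cells2 N" using assms by (auto simp: syt2_def bij_betw_def)
  then obtain r j where rj: "(r, j) \<in> cells2 N" "T (r, j) = x" by auto
  then have "r < 2" "j < N" by (auto simp: cells2_def)
  then have "r = 0 \<or> r = 1" by auto
  then show ?thesis using rj \<open>j < N\<close> by blast
qed

definition topset :: "nat \<Rightarrow> (nat \<times> nat \<Rightarrow> nat) \<Rightarrow> nat set" where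
  "topset N T = (\<lambda>j. T (0, j)) ` {..<N}"

definition fpath :: "nat \<Rightarrow> (nat \<times> nat \<Rightarrow> nat) \<Rightarrow> bool list" where
  "fpath N T = map (\<lambda>k. Suc k \<in> topset N T) [0..<2*N]"

lemma count_take_card:
  assumes "k \<le> length p"
  shows "count_list (take k p) x = card {l. l < k \<and> p ! l = x}"
proof -
  have "count_list (take k p) x = card {i. i < length (take k p) \<and> x = take k p ! i}"
    by (simp add: count_list_eq_length_filter length_filter_conv_card)
  also have "\<dots> = card {l. l < k \<and> p ! l = x}"
    using assms by (intro arg_cong[where f=card]) auto
  finally show ?thesis .
qed

lemma card_shift:
  assumes "0 \<notin> X"
  shows "card {l. l < k \<and> Suc l \<in> X} = card {x \<in> X. x \<le> k}"
proof -
  have "bij_betw Suc {l. l < k \<and> Suc l \<in> X} {x \<in> X. x \<le> k}"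
    unfolding bij_betw_def
  proof
    show "inj_on Suc {l. l < k \<and> Suc l \<in> X}" by simp
    show "Suc ` {l. l < k \<and> Suc l \<in> X} = {x \<in> X. x \<le> k}"
    proof
      show "Suc ` {l. l < k \<and> Suc l \<in> X} \<subseteq> {x \<in> X. x \<le> k}" by auto
      show "{x \<in> X. x \<le> k} \<subseteq> Suc ` {l. l < k \<and> Suc l \<in> X}"
      proof
        fix x assume x: "x \<in> {x \<in> X. x \<le> k}"
        then have "x \<in> X" by simp
        then have "x \<noteq> 0" using assms by (cases x) auto
        then obtain l where "x = Suc l" using not0_implies_Suc by blast
        then show "x \<in> Suc ` {l. l < k \<and> Suc l \<in> X}" using x by auto
      qed
    qed
  qed
  then show ?thesis by (rule bij_betw_same_card)
qed

lemma card_row: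
  assumes "T \<in> syt2 N" "r < 2"
  shows "card {x \<in> (\<lambda>j. T (r, j)) ` {..<N}. x \<le> k} = card {j. j < N \<and> T (r, j) \<le> k}"
proof -
  have "{x \<in> (\<lambda>j. T (r, j)) ` {..<N}. x \<le> k} = (\<lambda>j. T (r, j)) ` {j. j < N \<and> T (r, j) \<le> k}"
    by auto
  moreover have "inj_on (\<lambda>j. T (r, j)) {j. j < N \<and> T (r, j) \<le> k}"
    using syt_eq_iff[OF assms] by (auto simp: inj_on_def)
  ultimately show ?thesis by (simp add: card_image)
qed

lemma fpath_nth:
  "k < 2 * N \<Longrightarrow> fpath N T ! k = (Suc k \<in> topset N T)"
  by (simp add: fpath_def)

lemma not_top_iff_bot:
  assumes "T \<in> syt2 N" "k < 2 * N"
  shows "Suc k \<notin> topset N T \<longleftrightarrow> Suc k \<in> (\<lambda>j. T (1, j)) ` {..<N}"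
proof
  assume a: "Suc k \<notin> topset N T"
  have "Suc k \<in> {1..2*N}" using assms(2) by auto
  from syt_cover[OF assms(1) this] show "Suc k \<in> (\<lambda>j. T (1, j)) ` {..<N}"
  proof
    assume "\<exists>j<N. T (0, j) = Suc k"
    then have "Suc k \<in> topset N T" unfolding topset_def by (metis image_eqI lessThan_iff)
    with a show ?thesis by blast
  next
    assume "\<exists>j<N. T (1, j) = Suc k"
    then show ?thesis by (metis image_eqI lessThan_iff)
  qed
next
  assume "Suc k \<in> (\<lambda>j. T (1, j)) ` {..<N}"
  then show "Suc k \<notin> topset N T"
    using syt_neq[OF assms(1)] by (auto simp: topset_def)
qed

lemma count_true:
  assumes "T \<in> syt2 N" "k \<le> 2 * N"
  shows "count_list (take k (fpath N T)) True = card {j. j < N \<and> T (0, j) \<le> k}"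
proof -
  have "count_list (take k (fpath N T)) True = card {l. l < k \<and> fpath N T ! l = True}"
    using assms by (intro count_take_card) (simp add: fpath_def)
  also have "\<dots> = card {l. l < k \<and> Suc l \<in> topset N T}"
    using assms(2) by (intro arg_cong[where f=card]) (auto simp: fpath_nth)
  also have "\<dots> = card {x \<in> topset N T. x \<le> k}"
  proof (rule card_shift)
    show "0 \<notin> topset N T"
    proof
      assume "0 \<in> topset N T"
      then obtain j where "j < N" "T (0, j) = 0" by (auto simp: topset_def)
      with syt_range(1)[OF assms(1), of 0 j] show False by simp
    qed
  qed
  also have "\<dots> = card {j. j < N \<and> T (0, j) \<le> k}"
    unfolding topset_def using card_row[OF assms(1)] by simp
  finally show ?thesis .
qed

lemma count_false:
  assumes "T \<in> syt2 N" "k \<le> 2 * N"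
  shows "count_list (take k (fpath N T)) False = card {j. j < N \<and> T (1, j) \<le> k}"
proof -
  have "count_list (take k (fpath N T)) False = card {l. l < k \<and> fpath N T ! l = False}"
    using assms by (intro count_take_card) (simp add: fpath_def)
  also have "\<dots> = card {l. l < k \<and> Suc l \<in> (\<lambda>j. T (1, j)) ` {..<N}}"
  proof (intro arg_cong[where f=card] Collect_cong)
    fix l show "(l < k \<and> fpath N T ! l = False) = (l < k \<and> Suc l \<in> (\<lambda>j. T (1, j)) ` {..<N})"
      using fpath_nth[of l N T] not_top_iff_bot[OF assms(1), of l] assms(2) by auto
  qed
  also have "\<dots> = card {x \<in> (\<lambda>j. T (1, j)) ` {..<N}. x \<le> k}"
  proof (rule card_shift)
    show "0 \<notin> (\<lambda>j. T (1, j)) ` {..<N}"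
    proof
      assume "0 \<in> (\<lambda>j. T (1, j)) ` {..<N}"
      then obtain j where "j < N" "T (1, j) = 0" by auto
      with syt_range(1)[OF assms(1), of 1 j] show False by simp
    qed
  qed
  also have "\<dots> = card {j. j < N \<and> T (1, j) \<le> k}"
    using card_row[OF assms(1)] by simp
  finally show ?thesis .
qed

lemma fpath_paths:
  assumes "T \<in> syt2 N"
  shows "fpath N T \<in> paths N"
proof -
  have l: "length (fpath N T) = 2 * N" by (simp add: fpath_def)
  have "count_list (fpath N T) True = card {j. j < N \<and> T (0, j) \<le> 2 * N}"
    using count_true[OF assms, of "2*N"] l by simp
  also have "\<dots> = N" using syt_range[OF assms] by (subst Collect_cong[where Q="\<lambda>j. j < N"]) auto
  finally have t: "count_list (fpath N T) True = N" .
  have "count_list (fpath N T) False = card {j. j < N \<and> T (1, j) \<le> 2 * N}"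
    using count_false[OF assms, of "2*N"] l by simp
  also have "\<dots> = N" using syt_range[OF assms] by (subst Collect_cong[where Q="\<lambda>j. j < N"]) auto
  finally have f: "count_list (fpath N T) False = N" .
  have b: "count_list (take k (fpath N T)) False \<le> count_list (take k (fpath N T)) True" if "k \<le> 2 * N" for k
  proof -
    have "{j. j < N \<and> T (1, j) \<le> k} \<subseteq> {j. j < N \<and> T (0, j) \<le> k}"
      using syt_col[OF assms] by (auto intro: less_imp_le order.trans)
    then have "card {j. j < N \<and> T (1, j) \<le> k} \<le> card {j. j < N \<and> T (0, j) \<le> k}"
      by (intro card_mono) auto
    then show ?thesis using count_true[OF assms that] count_false[OF assms that] by simp
  qed
  show ?thesis using l t f b by (simp add: paths_def)
qed



lemma rw_len: "length (reading_word N T) = 2 * N"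
  by (simp add: reading_word_def)

lemma rw_nth: "x < 2 * N \<Longrightarrow> reading_word N T ! x = (if x < N then T (0, x) else T (1, x - N))"
proof (cases "x < N")
  case True then show ?thesis by (simp add: reading_word_def nth_append)
next
  case False
  moreover assume "x < 2 * N"
  ultimately have "x - N < N" by simp
  then show ?thesis using False by (simp add: reading_word_def nth_append)
qed

lemma rw_set:
  assumes "T \<in> syt2 N"
  shows "set (reading_word N T) = {1..2*N}"
proof -
  have "set (reading_word N T) = (\<lambda>j. T (0, j)) ` {..<N} \<union> (\<lambda>j. T (1, j)) ` {..<N}"
    by (auto simp: reading_word_def)
  also have "\<dots> = T ` cells2 N"
  proof -
    have "cells2 N = {0, 1} \<times> {..<N}"
      by (auto simp: cells2_def)
    then show ?thesis by auto
  qed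
  also have "\<dots> = {1..2*N}" using assms by (simp add: syt2_def bij_betw_def)
  finally show ?thesis .
qed

lemma rw_parity:
  assumes "T \<in> syt2 N"
  shows "evenperm (reading_perm N T) \<longleftrightarrow> even (card (invs (reading_word N T)))"
proof -
  have s: "set (reading_word N T) = {1..length (reading_word N T)}"
    using rw_set[OF assms] rw_len by simp
  have d: "distinct (reading_word N T)"
    by (rule card_distinct) (simp add: s)
  have "reading_perm N T = Pw (reading_word N T)"
    by (simp add: reading_perm_def Pw_def rw_len)
  then show ?thesis using evenperm_Pw[OF d s] by simp
qed

lemma invs_rw:
  assumes "T \<in> syt2 N"
  shows "card (invs (reading_word N T)) = card (SIGMA j:{..<N}. {i. i < N \<and> T (1, j) < T (0, i)})"
proof -
  let ?w = "reading_word N T"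
  let ?S = "SIGMA j:{..<N}. {i. i < N \<and> T (1, j) < T (0, i)}"
  have "bij_betw (\<lambda>(j, i). (i, N + j)) ?S (invs ?w)"
    unfolding bij_betw_def
  proof
    show "inj_on (\<lambda>(j, i). (i, N + j)) ?S" by (auto simp: inj_on_def)
    show "(\<lambda>(j, i). (i, N + j)) ` ?S = invs ?w"
    proof
      show "(\<lambda>(j, i). (i, N + j)) ` ?S \<subseteq> invs ?w"
      proof
        fix x assume "x \<in> (\<lambda>(j, i). (i, N + j)) ` ?S"
        then obtain j i where ji: "j < N" "i < N" "T (1, j) < T (0, i)" "x = (i, N + j)" by auto
        then show "x \<in> invs ?w" by (auto simp: invs_def rw_len rw_nth)
      qed
      show "invs ?w \<subseteq> (\<lambda>(j, i). (i, N + j)) ` ?S"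
      proof
        fix x assume "x \<in> invs ?w"
        then obtain a b where ab: "x = (a, b)" "a < b" "b < 2 * N" "?w ! b < ?w ! a"
          by (auto simp: invs_def rw_len)
        have bN: "N \<le> b"
        proof (rule ccontr)
          assume "\<not> N \<le> b"
          then have "T (0, b) < T (0, a)" using ab by (auto simp: rw_nth)
          moreover have "T (0, a) < T (0, b)" using syt_mono[OF assms, of 0 a b] ab \<open>\<not> N \<le> b\<close> by simp
          ultimately show False by simp
        qed
        have aN: "a < N"
        proof (rule ccontr)
          assume "\<not> a < N"
          then have "T (1, b - N) < T (1, a - N)" using ab bN by (auto simp: rw_nth)
          moreover have "T (1, a - N) < T (1, b - N)" using syt_mono[OF assms, of 1 "a - N" "b - N"] ab \<open>\<not> a < N\<close> by simp
          ultimately show False by simp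
        qed
        have "T (1, b - N) < T (0, a)" using ab aN bN by (auto simp: rw_nth)
        then have "(b - N, a) \<in> ?S" using aN bN ab by auto
        moreover have "x = (\<lambda>(j, i). (i, N + j)) (b - N, a)" using ab bN by simp
        ultimately show "x \<in> (\<lambda>(j, i). (i, N + j)) ` ?S" by blast
      qed
    qed
  qed
  then show ?thesis by (simp add: bij_betw_same_card)
qed

lemma area_eq:
  assumes "T \<in> syt2 N"
  shows "area_above N (fpath N T) = card (invs (reading_word N T))"
proof -
  let ?p = "fpath N T"
  let ?K = "{k. k < length ?p \<and> \<not> ?p ! k}"
  have lp: "length ?p = 2 * N" by (simp add: fpath_def)
  have b1: "j < N \<Longrightarrow> 1 \<le> T (1, j)" "j < N \<Longrightarrow> T (1, j) \<le> 2 * N" for j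
    using syt_range[OF assms, of 1 j] by auto
  have bij: "bij_betw (\<lambda>j. T (1, j) - 1) {..<N} ?K"
    unfolding bij_betw_def
  proof
    show "inj_on (\<lambda>j. T (1, j) - 1) {..<N}"
    proof (rule inj_onI)
      fix i j assume "i \<in> {..<N}" "j \<in> {..<N}" "T (1, i) - 1 = T (1, j) - 1"
      moreover have "1 \<le> T (1, i)" "1 \<le> T (1, j)" using b1 \<open>i \<in> {..<N}\<close> \<open>j \<in> {..<N}\<close> by auto
      ultimately have "T (1, i) = T (1, j)" by linarith
      then show "i = j" using syt_eq_iff[OF assms, of 1 i j] \<open>i \<in> {..<N}\<close> \<open>j \<in> {..<N}\<close> by simp
    qed
    show "(\<lambda>j. T (1, j) - 1) ` {..<N} = ?K"
    proof
      show "(\<lambda>j. T (1, j) - 1) ` {..<N} \<subseteq> ?K"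
      proof
        fix k assume "k \<in> (\<lambda>j. T (1, j) - 1) ` {..<N}"
        then obtain j where j: "j < N" "k = T (1, j) - 1" by auto
        then have sk: "Suc k = T (1, j)" "k < 2 * N" using b1[of j] by auto
        then have "Suc k \<in> (\<lambda>j. T (1, j)) ` {..<N}" using j by auto
        then have "Suc k \<notin> topset N T" using not_top_iff_bot[OF assms sk(2)] by simp
        then show "k \<in> ?K" using sk lp fpath_nth by simp
      qed
      show "?K \<subseteq> (\<lambda>j. T (1, j) - 1) ` {..<N}"
      proof
        fix k assume "k \<in> ?K"
        then have k: "k < 2 * N" "Suc k \<notin> topset N T" using lp fpath_nth by auto
        then have "Suc k \<in> (\<lambda>j. T (1, j)) ` {..<N}" using not_top_iff_bot[OF assms k(1)] by simp
        then obtain j where "j < N" "Suc k = T (1, j)" by auto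
        then show "k \<in> (\<lambda>j. T (1, j) - 1) ` {..<N}" by (metis diff_Suc_1 imageI lessThan_iff)
      qed
    qed
  qed
  have "area_above N ?p = (\<Sum>k\<in>?K. N - count_list (take k ?p) True)"
    by (simp add: area_above_def)
  also have "\<dots> = (\<Sum>j<N. N - count_list (take (T (1, j) - 1) ?p) True)"
    by (rule sum.reindex_bij_betw[OF bij, symmetric])
  also have "\<dots> = (\<Sum>j<N. card {i. i < N \<and> T (1, j) < T (0, i)})"
  proof (rule sum.cong)
    fix j assume j: "j \<in> {..<N}"
    let ?b = "T (1, j)"
    have c: "count_list (take (?b - 1) ?p) True = card {i. i < N \<and> T (0, i) \<le> ?b - 1}"
      using count_true[OF assms, of "?b - 1"] b1[of j] j by simp
    let ?A = "{i. i < N \<and> T (0, i) \<le> ?b - 1}"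
    let ?B = "{i. i < N \<and> ?b < T (0, i)}"
    have u: "?A \<union> ?B = {..<N}"
    proof
      show "?A \<union> ?B \<subseteq> {..<N}" by auto
      show "{..<N} \<subseteq> ?A \<union> ?B"
      proof
        fix i assume "i \<in> {..<N}"
        then have "T (0, i) \<noteq> ?b" using syt_neq[OF assms] j by simp
        then show "i \<in> ?A \<union> ?B" using \<open>i \<in> {..<N}\<close> b1[of j] j by auto
      qed
    qed
    have "?A \<inter> ?B = {}" using b1[of j] j by auto
    then have "card ?A + card ?B = N" using u card_Un_disjoint[of ?A ?B] by simp
    then show "N - count_list (take (?b - 1) ?p) True = card ?B" using c by simp
  qed simp
  also have "\<dots> = card (SIGMA j:{..<N}. {i. i < N \<and> T (1, j) < T (0, i)})"
    by (simp add: card_SigmaI)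
  also have "\<dots> = card (invs (reading_word N T))"
    using invs_rw[OF assms] by simp
  finally show ?thesis .
qed



definition Atr :: "nat \<Rightarrow> bool list \<Rightarrow> nat list" where
  "Atr N p = filter (\<lambda>k. p ! k) [0..<2*N]"
definition Afl :: "nat \<Rightarrow> bool list \<Rightarrow> nat list" where
  "Afl N p = filter (\<lambda>k. \<not> p ! k) [0..<2*N]"
definition gT :: "nat \<Rightarrow> bool list \<Rightarrow> nat \<times> nat \<Rightarrow> nat" where
  "gT N p = (\<lambda>(r, j). if r = 0 \<and> j < N then Suc (Atr N p ! j)
      else if r = 1 \<and> j < N then Suc (Afl N p ! j) else 0)"

lemma set_Atr: "set (Atr N p) = {k. k < 2*N \<and> p ! k}" by (auto simp: Atr_def)
lemma set_Afl: "set (Afl N p) = {k. k < 2*N \<and> \<not> p ! k}" by (auto simp: Afl_def)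
lemma sorted_Atr: "sorted_wrt (<) (Atr N p)" unfolding Atr_def by (rule sorted_wrt_filter) simp
lemma sorted_Afl: "sorted_wrt (<) (Afl N p)" unfolding Afl_def by (rule sorted_wrt_filter) simp

lemma count_full: "count_list p x = card {l. l < length p \<and> p ! l = x}"
  using count_take_card[of "length p" p x] by simp

lemma len_filter_idx: "length (filter P [0..<n]) = card {i. i < n \<and> P i}"
  by (auto simp: length_filter_conv_card intro!: arg_cong[where f=card])

lemma len_Atr: assumes "p \<in> paths N" shows "length (Atr N p) = N"
proof -
  have "length (Atr N p) = card {i. i < 2*N \<and> p ! i}" by (simp add: Atr_def len_filter_idx)
  also have "\<dots> = count_list p True" using assms by (simp add: count_full paths_def)
  also have "\<dots> = N" using assms by (simp add: paths_def)
  finally show ?thesis .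
qed

lemma len_Afl: assumes "p \<in> paths N" shows "length (Afl N p) = N"
proof -
  have "length (Afl N p) = card {i. i < 2*N \<and> \<not> p ! i}" by (simp add: Afl_def len_filter_idx)
  also have "\<dots> = count_list p False" using assms by (simp add: count_full paths_def)
  also have "\<dots> = N" using assms by (simp add: paths_def)
  finally show ?thesis .
qed

lemma top_gT:
  assumes "p \<in> paths N"
  shows "topset N (gT N p) = Suc ` set (Atr N p)"
proof -
  have "topset N (gT N p) = (\<lambda>j. Suc (Atr N p ! j)) ` {..<N}"
    by (auto simp: topset_def gT_def)
  also have "\<dots> = Suc ` ((\<lambda>j. Atr N p ! j) ` {..<length (Atr N p)})"
    using len_Atr[OF assms] by (simp add: image_image)
  also have "\<dots> = Suc ` set (Atr N p)" by (auto simp: set_conv_nth)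
  finally show ?thesis .
qed

lemma fg: assumes "p \<in> paths N" shows "fpath N (gT N p) = p"
proof (rule nth_equalityI)
  have lp: "length p = 2 * N" using assms by (simp add: paths_def)
  then show "length (fpath N (gT N p)) = length p" by (simp add: fpath_def)
  fix k assume "k < length (fpath N (gT N p))"
  then have k: "k < 2 * N" by (simp add: fpath_def)
  then show "fpath N (gT N p) ! k = p ! k"
    by (auto simp: fpath_nth top_gT[OF assms] set_Atr)
qed

lemma cells2_eq: "cells2 N = {0, 1} \<times> {..<N}" by (auto simp: cells2_def)

lemma col_ok:
  assumes "p \<in> paths N" "j < N"
  shows "Atr N p ! j < Afl N p ! j"
proof (rule ccontr)
  let ?A = "Atr N p" and ?B = "Afl N p"
  assume "\<not> ?A ! j < ?B ! j"
  have lA: "length ?A = N" and lB: "length ?B = N" using len_Atr len_Afl assms by auto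
  have Aj: "?A ! j \<in> set ?A" and Bj: "?B ! j \<in> set ?B" using lA lB assms by auto
  then have "?A ! j \<noteq> ?B ! j" by (auto simp: set_Atr set_Afl)
  with \<open>\<not> ?A ! j < ?B ! j\<close> have BA: "?B ! j < ?A ! j" by simp
  have B2: "?B ! j < 2 * N" using Bj by (simp add: set_Afl)
  define k where "k = Suc (?B ! j)"
  have k2: "k \<le> length p" using B2 assms by (simp add: k_def paths_def)
  have ballot: "count_list (take k p) False \<le> count_list (take k p) True"
    using assms k2 by (simp add: paths_def)
  have finF: "finite {l. l < k \<and> p ! l = False}" by simp
  have sub1: "(\<lambda>i. ?B ! i) ` {..j} \<subseteq> {l. l < k \<and> p ! l = False}"
  proof
    fix x assume "x \<in> (\<lambda>i. ?B ! i) ` {..j}"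
    then obtain i where i: "i \<le> j" "x = ?B ! i" by auto
    have "?B ! i \<le> ?B ! j"
      using sorted_wrt_nth_less[OF sorted_Afl[of N p], of i j] i(1) lB assms(2)
      by (cases "i = j") auto
    moreover have "?B ! i \<in> set ?B" using i lB assms(2) by auto
    ultimately show "x \<in> {l. l < k \<and> p ! l = False}" using i by (auto simp: k_def set_Afl)
  qed
  have "inj_on (\<lambda>i. ?B ! i) {..j}"
    using sorted_wrt_nth_less[OF sorted_Afl[of N p]] lB assms(2)
    by (auto simp: inj_on_def) (metis linorder_neqE_nat less_irrefl order_le_less_trans)
  then have c1: "Suc j \<le> card {l. l < k \<and> p ! l = False}"
    using card_mono[OF finF sub1] by (simp add: card_image)
  have sub2: "{l. l < k \<and> p ! l = True} \<subseteq> (\<lambda>i. ?A ! i) ` {..<j}"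
  proof
    fix l assume l: "l \<in> {l. l < k \<and> p ! l = True}"
    then have "l \<in> set ?A" using k2 assms by (auto simp: set_Atr paths_def)
    then obtain i where i: "i < N" "l = ?A ! i" using lA by (auto simp: in_set_conv_nth)
    have "i < j"
    proof (rule ccontr)
      assume "\<not> i < j"
      then have "?A ! j \<le> ?A ! i"
        using sorted_wrt_nth_less[OF sorted_Atr[of N p], of j i] i lA by (cases "i = j") auto
      moreover have "l \<le> ?B ! j" using l by (simp add: k_def)
      ultimately show False using BA i by simp
    qed
    then show "l \<in> (\<lambda>i. ?A ! i) ` {..<j}" using i by auto
  qed
  have "card {l. l < k \<and> p ! l = True} \<le> card ((\<lambda>i. ?A ! i) ` {..<j})"
    by (rule card_mono[OF _ sub2]) simp
  also have "\<dots> \<le> j" using card_image_le[of "{..<j}" "\<lambda>i. ?A ! i"] by simp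
  finally have c2: "card {l. l < k \<and> p ! l = True} \<le> j" .
  have "count_list (take k p) False = card {l. l < k \<and> p ! l = False}"
    "count_list (take k p) True = card {l. l < k \<and> p ! l = True}"
    using count_take_card[OF k2] by auto
  then show False using ballot c1 c2 by simp
qed



lemma g_syt:
  assumes "p \<in> paths N"
  shows "gT N p \<in> syt2 N"
proof -
  let ?A = "Atr N p" and ?B = "Afl N p"
  have lA: "length ?A = N" and lB: "length ?B = N" using len_Atr len_Afl assms by auto
  have lp: "length p = 2 * N" using assms by (simp add: paths_def)
  have img: "gT N p ` cells2 N = {1..2*N}"
  proof -
    have "gT N p ` cells2 N = (\<lambda>j. gT N p (0, j)) ` {..<N} \<union> (\<lambda>j. gT N p (1, j)) ` {..<N}"
      unfolding cells2_eq by auto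
    also have "\<dots> = (\<lambda>j. Suc (?A ! j)) ` {..<N} \<union> (\<lambda>j. Suc (?B ! j)) ` {..<N}"
      by (auto simp: gT_def)
    also have "\<dots> = Suc ` set ?A \<union> Suc ` set ?B"
      using lA lB by (auto simp: set_conv_nth)
    also have "\<dots> = Suc ` {..<2*N}" by (auto simp: set_Atr set_Afl)
    also have "\<dots> = {1..2*N}"
    proof
      show "Suc ` {..<2*N} \<subseteq> {1..2*N}" by auto
      show "{1..2*N} \<subseteq> Suc ` {..<2*N}"
      proof
        fix x assume "x \<in> {1..2*N}"
        then have "x = Suc (x - 1)" "x - 1 < 2 * N" by auto
        then show "x \<in> Suc ` {..<2*N}" by (metis imageI lessThan_iff)
      qed
    qed
    finally show ?thesis .
  qed
  have cc: "card (cells2 N) = 2 * N" unfolding cells2_eq by (simp add: card_cartesian_product)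
  have "inj_on (gT N p) (cells2 N)"
    using img cc by (subst inj_on_iff_eq_card) (auto simp: cells2_eq)
  then have bij: "bij_betw (gT N p) (cells2 N) {1..2*N}" using img by (simp add: bij_betw_def)
  have z: "\<forall>x. x \<notin> cells2 N \<longrightarrow> gT N p x = 0" by (auto simp: cells2_def gT_def)
  have r: "\<forall>r j. r < 2 \<and> Suc j < N \<longrightarrow> gT N p (r, j) < gT N p (r, Suc j)"
  proof (intro allI impI)
    fix r j :: nat assume rj: "r < 2 \<and> Suc j < N"
    have a1: "?A ! j < ?A ! Suc j" using rj sorted_wrt_nth_less[OF sorted_Atr[of N p], of j "Suc j"] lA by simp
    have b1: "?B ! j < ?B ! Suc j" using rj sorted_wrt_nth_less[OF sorted_Afl[of N p], of j "Suc j"] lB by simp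
    have "r = 0 \<or> r = 1" using rj by auto
    then show "gT N p (r, j) < gT N p (r, Suc j)"
    proof
      assume "r = 0" then show ?thesis using a1 rj by (simp add: gT_def)
    next
      assume "r = 1" then show ?thesis using b1 rj by (simp add: gT_def)
    qed
  qed
  have c: "\<forall>j. j < N \<longrightarrow> gT N p (0, j) < gT N p (1, j)"
    using col_ok[OF assms] by (simp add: gT_def)
  show ?thesis using bij z r c by (simp add: syt2_def)
qed

lemma Atr_f:
  assumes "T \<in> syt2 N"
  shows "Atr N (fpath N T) = map (\<lambda>j. T (0, j) - 1) [0..<N]"
proof (rule sorted_distinct_set_unique)
  let ?m = "map (\<lambda>j. T (0, j) - 1) [0..<N]"
  have sw: "sorted_wrt (<) ?m"
  proof (subst sorted_wrt_iff_nth_less, intro allI impI)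
    fix i j assume "i < j" "j < length ?m"
    then have "T (0, i) < T (0, j)" "1 \<le> T (0, i)" using syt_mono[OF assms, of 0 i j] syt_range[OF assms, of 0 i] by auto
    then show "?m ! i < ?m ! j" using \<open>i < j\<close> \<open>j < length ?m\<close> by simp
  qed
  show "sorted (Atr N (fpath N T))" "distinct (Atr N (fpath N T))"
    using sorted_Atr strict_sorted_iff by blast+
  show "sorted ?m" "distinct ?m" using sw strict_sorted_iff by blast+
  show "set (Atr N (fpath N T)) = set ?m"
  proof -
    have "set (Atr N (fpath N T)) = {k. k < 2 * N \<and> Suc k \<in> topset N T}"
      by (auto simp: set_Atr fpath_nth)
    also have "\<dots> = (\<lambda>j. T (0, j) - 1) ` {..<N}"
    proof
      show "{k. k < 2 * N \<and> Suc k \<in> topset N T} \<subseteq> (\<lambda>j. T (0, j) - 1) ` {..<N}"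
      proof
        fix k assume "k \<in> {k. k < 2 * N \<and> Suc k \<in> topset N T}"
        then obtain j where "j < N" "Suc k = T (0, j)" by (auto simp: topset_def)
        then have "k = T (0, j) - 1" "j \<in> {..<N}" by auto
        then show "k \<in> (\<lambda>j. T (0, j) - 1) ` {..<N}" by blast
      qed
      show "(\<lambda>j. T (0, j) - 1) ` {..<N} \<subseteq> {k. k < 2 * N \<and> Suc k \<in> topset N T}"
      proof
        fix k assume "k \<in> (\<lambda>j. T (0, j) - 1) ` {..<N}"
        then obtain j where j: "j < N" "k = T (0, j) - 1" by auto
        then have "Suc k = T (0, j)" "k < 2 * N" using syt_range[OF assms, of 0 j] by auto
        then show "k \<in> {k. k < 2 * N \<and> Suc k \<in> topset N T}" using j by (auto simp: topset_def)
      qed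
    qed
    finally show ?thesis by (simp add: lessThan_atLeast0)
  qed
qed

lemma Afl_f:
  assumes "T \<in> syt2 N"
  shows "Afl N (fpath N T) = map (\<lambda>j. T (1, j) - 1) [0..<N]"
proof (rule sorted_distinct_set_unique)
  let ?m = "map (\<lambda>j. T (1, j) - 1) [0..<N]"
  have sw: "sorted_wrt (<) ?m"
  proof (subst sorted_wrt_iff_nth_less, intro allI impI)
    fix i j assume "i < j" "j < length ?m"
    then have "T (1, i) < T (1, j)" "1 \<le> T (1, i)" using syt_mono[OF assms, of 1 i j] syt_range[OF assms, of 1 i] by auto
    then show "?m ! i < ?m ! j" using \<open>i < j\<close> \<open>j < length ?m\<close> by simp
  qed
  show "sorted (Afl N (fpath N T))" "distinct (Afl N (fpath N T))"
    using sorted_Afl strict_sorted_iff by blast+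
  show "sorted ?m" "distinct ?m" using sw strict_sorted_iff by blast+
  show "set (Afl N (fpath N T)) = set ?m"
  proof -
    have "set (Afl N (fpath N T)) = {k. k < 2 * N \<and> \<not> fpath N T ! k}"
      by (simp add: set_Afl)
    also have "\<dots> = {k. k < 2 * N \<and> Suc k \<in> (\<lambda>j. T (1, j)) ` {..<N}}"
    proof (rule Collect_cong)
      fix k show "(k < 2 * N \<and> \<not> fpath N T ! k) = (k < 2 * N \<and> Suc k \<in> (\<lambda>j. T (1, j)) ` {..<N})"
        using fpath_nth[of k N T] not_top_iff_bot[OF assms, of k] by auto
    qed
    also have "\<dots> = (\<lambda>j. T (1, j) - 1) ` {..<N}"
    proof
      show "{k. k < 2 * N \<and> Suc k \<in> (\<lambda>j. T (1, j)) ` {..<N}} \<subseteq> (\<lambda>j. T (1, j) - 1) ` {..<N}"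
      proof
        fix k assume "k \<in> {k. k < 2 * N \<and> Suc k \<in> (\<lambda>j. T (1, j)) ` {..<N}}"
        then obtain j where "j < N" "Suc k = T (1, j)" by auto
        then have "k = T (1, j) - 1" "j \<in> {..<N}" by auto
        then show "k \<in> (\<lambda>j. T (1, j) - 1) ` {..<N}" by blast
      qed
      show "(\<lambda>j. T (1, j) - 1) ` {..<N} \<subseteq> {k. k < 2 * N \<and> Suc k \<in> (\<lambda>j. T (1, j)) ` {..<N}}"
      proof
        fix k assume "k \<in> (\<lambda>j. T (1, j) - 1) ` {..<N}"
        then obtain j where j: "j < N" "k = T (1, j) - 1" by auto
        then have "Suc k = T (1, j)" "k < 2 * N" using syt_range[OF assms, of 1 j] by auto
        then show "k \<in> {k. k < 2 * N \<and> Suc k \<in> (\<lambda>j. T (1, j)) ` {..<N}}" using j by auto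
      qed
    qed
    finally show ?thesis by (simp add: lessThan_atLeast0)
  qed
qed

lemma gf:
  assumes "T \<in> syt2 N"
  shows "gT N (fpath N T) = T"
proof
  fix x :: "nat \<times> nat"
  obtain r j where x: "x = (r, j)" by fastforce
  show "gT N (fpath N T) x = T x"
  proof (cases "r < 2 \<and> j < N")
    case True
    then have "r = 0 \<or> r = 1" by auto
    then show ?thesis
      using True syt_range[OF assms, of r j]
      by (auto simp: x gT_def Atr_f[OF assms] Afl_f[OF assms])
  next
    case False
    then have "x \<notin> cells2 N" by (auto simp: x cells2_def)
    then have "T x = 0" using assms unfolding syt2_def by blast
    then show ?thesis using False by (auto simp: x gT_def)
  qed
qed

theorem lemma2p18:
  fixes c n :: nat
  assumes "odd c" "odd n" "c > 0" "n > c"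
  defines "N \<equiv> n - c - 1"
  shows "\<exists>f. bij_betw f (syt2 N) (paths N) \<and>
           (\<forall>T \<in> syt2 N. even (area_above N (f T)) \<longleftrightarrow> evenperm (reading_perm N T))"
proof (intro exI conjI)
  show "bij_betw (fpath N) (syt2 N) (paths N)"
    by (rule bij_betw_byWitness[where f'="gT N"]) (auto simp: gf fg fpath_paths g_syt)
  show "\<forall>T \<in> syt2 N. even (area_above N (fpath N T)) \<longleftrightarrow> evenperm (reading_perm N T)"
    by (simp add: area_eq rw_parity)
qed

end
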